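(* Let $\Gamma$ be a finite undirected graph in which any two adjacent vertices have exactly one common neighbor. Then $G_{aut}^+(\Gamma)=G_{aut}^*(\Gamma)$. In particular, $G_{aut}^+(\Gamma)=G_{aut}^*(\Gamma)$ for every distance-regular graph $\Gamma$ whose intersection array satisfies $b_0=b_1+2$.
   Context: $\Gamma=(V,E)$ is a finite simple undirected graph, $V=\{1,\dots,n\}$. $C(G_{aut}^+(\Gamma))$ is the universal unital $C^*$-algebra generated by $u_{ij}$, $1\le i,j\le n$, with relations: (R1) $u_{ij}=u_{ij}^*=u_{ij}^2$; (R2) $\sum_{l} u_{il}=1=\sum_{l} u_{li}$ for all $i$; (R3) $u_{ij}u_{kl}=u_{kl}u_{ij}=0$ whenever exactly one of $(i,k)\in E$, $(j,l)\in E$ holds. "$G_{aut}^+(\Gamma)=G_{aut}^*(\Gamma)$" means that $u_{ij}u_{kl}=u_{kl}u_{ij}$ holds in $C(G_{aut}^+(\Gamma))$ for all $(i,k)\in E$, $(j,l)\in E$. A connected regular graph is distance-regular with diameter $D$ and intersection array $\{b_0,\dots,b_{D-1};c_1,\dots,c_D\}$ if for any vertices $v,w$ with $d(v,w)=i$, exactly $b_i$ neighbors of $w$ are at distance $i+1$ from $v$ and exactly $c_i$ neighbors of $w$ are at distance $i-1$ from $v$ (these numbers depending only on $i$). *)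

theory Defs
  imports "HOL-Analysis.Analysis"
begin

text \<open>A unital C*-algebra: a real Banach algebra with unit (norm 1 = 1, submultiplicative
norm, completeness) whose real scalar multiplication extends to a complex one
(sc), equipped with an involution st satisfying the C*-identity.\<close>

definition unital_cstar_algebra ::
  "('a::{real_normed_algebra_1,banach} \<Rightarrow> 'a) \<Rightarrow> (complex \<Rightarrow> 'a \<Rightarrow> 'a) \<Rightarrow> bool" where
  "unital_cstar_algebra st sc \<longleftrightarrow>
     (\<forall>r x. sc (complex_of_real r) x = scaleR r x) \<and>
     (\<forall>a b x. sc (a + b) x = sc a x + sc b x) \<and>
     (\<forall>a x y. sc a (x + y) = sc a x + sc a y) \<and>
     (\<forall>a b x. sc a (sc b x) = sc (a * b) x) \<and>
     (\<forall>x. sc 1 x = x) \<and>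
     (\<forall>a x y. sc a (x * y) = sc a x * y \<and> sc a (x * y) = x * sc a y) \<and>
     (\<forall>a x. norm (sc a x) = cmod a * norm x) \<and>
     (\<forall>x. st (st x) = x) \<and>
     (\<forall>x y. st (x + y) = st x + st y) \<and>
     (\<forall>a x. st (sc a x) = sc (cnj a) (st x)) \<and>
     (\<forall>x y. st (x * y) = st y * st x) \<and>
     (\<forall>x. norm (st x * x) = (norm x)\<^sup>2)"

definition simple_graph :: "nat \<Rightarrow> (nat \<Rightarrow> nat \<Rightarrow> bool) \<Rightarrow> bool" where
  "simple_graph n E \<longleftrightarrow>
     (\<forall>i k. E i k \<longrightarrow> i \<in> {1..n} \<and> k \<in> {1..n}) \<and>
     (\<forall>i k. E i k \<longrightarrow> E k i) \<and> (\<forall>i. \<not> E i i)"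

definition qaut_rel ::
  "nat \<Rightarrow> (nat \<Rightarrow> nat \<Rightarrow> bool) \<Rightarrow> ('a::{real_normed_algebra_1,banach} \<Rightarrow> 'a)
     \<Rightarrow> (nat \<Rightarrow> nat \<Rightarrow> 'a) \<Rightarrow> bool" where
  "qaut_rel n E st u \<longleftrightarrow>
     (\<forall>i\<in>{1..n}. \<forall>j\<in>{1..n}. u i j = st (u i j) \<and> u i j = u i j * u i j) \<and>
     (\<forall>i\<in>{1..n}. (\<Sum>l\<in>{1..n}. u i l) = 1 \<and> (\<Sum>l\<in>{1..n}. u l i) = 1) \<and>
     (\<forall>i\<in>{1..n}. \<forall>j\<in>{1..n}. \<forall>k\<in>{1..n}. \<forall>l\<in>{1..n}.
        (E i k \<noteq> E j l) \<longrightarrow> u i j * u k l = 0 \<and> u k l * u i j = 0)"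

text \<open>G_aut^+(Gamma) = G_aut^*(Gamma): u_ij u_kl = u_kl u_ij in the universal C*-algebra for
all edges (i,k), (j,l). By the universal property this is equivalent to: in every
unital C*-algebra, every family satisfying (R1)-(R3) has this commutation property.
The C*-algebra type is a type variable, universally quantified at theorem level.\<close>

definition qaut_eq_star :: "'a::{real_normed_algebra_1,banach} itself \<Rightarrow> nat \<Rightarrow> (nat \<Rightarrow> nat \<Rightarrow> bool) \<Rightarrow> bool" where
  "qaut_eq_star TYPE('a) n E \<longleftrightarrow>
     (\<forall>(st :: 'a \<Rightarrow> 'a) sc (u :: nat \<Rightarrow> nat \<Rightarrow> 'a).
        unital_cstar_algebra st sc \<and> qaut_rel n E st u \<longrightarrow>
        (\<forall>i\<in>{1..n}. \<forall>j\<in>{1..n}. \<forall>k\<in>{1..n}. \<forall>l\<in>{1..n}.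
           E i k \<and> E j l \<longrightarrow> u i j * u k l = u k l * u i j))"

fun ball_k :: "(nat \<Rightarrow> nat \<Rightarrow> bool) \<Rightarrow> nat \<Rightarrow> nat \<Rightarrow> nat set" where
  "ball_k E 0 v = {v}"
| "ball_k E (Suc k) v = ball_k E k v \<union> {w. \<exists>x\<in>ball_k E k v. E x w}"

definition gdist :: "(nat \<Rightarrow> nat \<Rightarrow> bool) \<Rightarrow> nat \<Rightarrow> nat \<Rightarrow> nat" where
  "gdist E v w = (LEAST k. w \<in> ball_k E k v)"

definition connected_graph :: "nat \<Rightarrow> (nat \<Rightarrow> nat \<Rightarrow> bool) \<Rightarrow> bool" where
  "connected_graph n E \<longleftrightarrow> (\<forall>v\<in>{1..n}. \<forall>w\<in>{1..n}. \<exists>k. w \<in> ball_k E k v)"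

definition regular_graph :: "nat \<Rightarrow> (nat \<Rightarrow> nat \<Rightarrow> bool) \<Rightarrow> bool" where
  "regular_graph n E \<longleftrightarrow>
     (\<exists>r. \<forall>v\<in>{1..n}. card {w\<in>{1..n}. E v w} = r)"

definition diameter :: "nat \<Rightarrow> (nat \<Rightarrow> nat \<Rightarrow> bool) \<Rightarrow> nat" where
  "diameter n E = Max {gdist E v w | v w. v \<in> {1..n} \<and> w \<in> {1..n}}"

text \<open>Distance-regular with diameter D and intersection numbers b i (0 \<le> i \<le> D, so b D = 0)
and c i (1 \<le> i \<le> D).\<close>

definition distance_regular ::
  "nat \<Rightarrow> (nat \<Rightarrow> nat \<Rightarrow> bool) \<Rightarrow> nat \<Rightarrow> (nat \<Rightarrow> nat) \<Rightarrow> (nat \<Rightarrow> nat) \<Rightarrow> bool" where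
  "distance_regular n E D b c \<longleftrightarrow>
     connected_graph n E \<and> regular_graph n E \<and> D = diameter n E \<and>
     (\<forall>v\<in>{1..n}. \<forall>w\<in>{1..n}. gdist E v w \<le> D \<longrightarrow>
        card {x\<in>{1..n}. E w x \<and> gdist E v x = gdist E v w + 1} = b (gdist E v w) \<and>
        (gdist E v w \<ge> 1 \<longrightarrow>
          card {x\<in>{1..n}. E w x \<and> gdist E v x + 1 = gdist E v w} = c (gdist E v w)))"

end

theory Submission
  imports Defs
begin

lemma proj_comm:
  fixes A B C :: "'a::{real_normed_algebra_1,banach}"
  assumes cs: "unital_cstar_algebra st sc"
    and sA: "A = st A" and sB: "B = st B" and iA: "A * A = A" and iB: "B * B = B"
    and h1: "A * B = A * C * B" and h2: "C * B = C * A * B" and h3: "C * A = C * B * A"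
  shows "A * B = B * A"
proof -
  have stadd: "\<And>x y. st (x + y) = st x + st y" and stmul: "\<And>x y. st (x * y) = st y * st x"
    and cst: "\<And>x. norm (st x * x) = (norm x)\<^sup>2"
    using cs unfolding unital_cstar_algebra_def by auto
  have stsub: "\<And>x y. st (x - y) = st x - st y"
    by (metis add_diff_cancel eq_diff_eq stadd)
  have ACA: "A * C * A = A * B * A"
  proof -
    have "A * C * A = A * (C * A)" by (simp add: mult.assoc)
    also have "\<dots> = A * C * B * A" using h3 by (simp add: mult.assoc)
    also have "\<dots> = A * B * A" using h1 by simp
    finally show ?thesis .
  qed
  have ABAB: "A * B = A * B * A * B"
  proof -
    have "A * B = A * (C * B)" using h1 by (simp add: mult.assoc)
    also have "\<dots> = A * C * A * B" using h2 by (simp add: mult.assoc)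
    also have "\<dots> = A * B * A * B" using ACA by simp
    finally show ?thesis .
  qed
  have ABA: "A * B * A * B * A = A * B * A"
    using ABAB by (metis mult.assoc)
  define y where "y = B * A - A * B * A"
  have sty: "st y = A * B - A * B * A"
    unfolding y_def stsub stmul using sA sB by (metis mult.assoc)
  have "st y * y = A * B * (B * A) - A * B * (A * B * A) - A * B * A * (B * A) + A * B * A * (A * B * A)"
  proof -
    have "st y * y = (A * B - A * B * A) * (B * A - A * B * A)" using sty y_def by simp
    then show ?thesis by (simp add: algebra_simps)
  qed
  also have "\<dots> = A * B * A - A * B * A * B * A - A * B * A * B * A + A * B * A * B * A"
  proof -
    have e1: "A * B * (B * A) = A * B * A" using iB by (metis mult.assoc)
    have e2: "A * B * (A * B * A) = A * B * A * B * A" by (simp add: mult.assoc)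
    have e3: "A * B * A * (B * A) = A * B * A * B * A" by (simp add: mult.assoc)
    have e4: "A * B * A * (A * B * A) = A * B * A * B * A" using iA by (metis mult.assoc)
    show ?thesis unfolding e1 e2 e3 e4 ..
  qed
  also have "\<dots> = 0" using ABA by simp
  finally have "st y * y = 0" .
  then have "norm y = 0" using cst[of y] by simp
  then have "B * A = A * B * A" unfolding y_def by simp
  moreover have "A * B = A * B * A"
  proof -
    have "A * B = st (B * A)" using sA sB stmul by simp
    also have "\<dots> = st (A * B * A)" using \<open>B * A = A * B * A\<close> by simp
    also have "\<dots> = A * B * A" using sA sB stmul by (metis mult.assoc)
    finally show ?thesis .
  qed
  ultimately show ?thesis by simp
qed

lemma three:
  fixes u :: "nat \<Rightarrow> nat \<Rightarrow> 'a::{real_normed_algebra_1,banach}"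
  assumes sg: "simple_graph n E" and qr: "qaut_rel n E st u"
    and exy: "E x y" and eab: "E a b" and exz: "E x z" and eyz: "E y z"
    and cV: "c \<in> {1..n}"
    and uq: "\<forall>s\<in>{1..n}. E a s \<and> E b s \<longrightarrow> s = c"
  shows "u x a * u y b = u x a * u z c * u y b"
proof -
  have V: "x \<in> {1..n}" "y \<in> {1..n}" "z \<in> {1..n}" "a \<in> {1..n}" "b \<in> {1..n}"
    using sg exy eab exz unfolding simple_graph_def by blast+
  have sym: "\<And>p q. E p q \<Longrightarrow> E q p" using sg unfolding simple_graph_def by blast
  have row: "(\<Sum>s\<in>{1..n}. u z s) = 1" using qr V unfolding qaut_rel_def by blast
  have zero: "\<And>i j k l. i \<in> {1..n} \<Longrightarrow> j \<in> {1..n} \<Longrightarrow> k \<in> {1..n} \<Longrightarrow> l \<in> {1..n} \<Longrightarrow>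
      E i k \<noteq> E j l \<Longrightarrow> u i j * u k l = 0"
    using qr unfolding qaut_rel_def by blast
  have "u x a * u y b = u x a * (\<Sum>s\<in>{1..n}. u z s) * u y b" using row by simp
  also have "\<dots> = (\<Sum>s\<in>{1..n}. u x a * u z s * u y b)"
    by (simp add: sum_distrib_left sum_distrib_right)
  also have "\<dots> = u x a * u z c * u y b"
  proof -
    have Z: "\<forall>s\<in>{1..n} - {c}. u x a * u z s * u y b = 0"
    proof
      fix s assume s: "s \<in> {1..n} - {c}"
      then have sV: "s \<in> {1..n}" and sc: "s \<noteq> c" by auto
      have "\<not> (E a s \<and> E b s)" using uq sV sc by blast
      then show "u x a * u z s * u y b = 0"
      proof (cases "E a s")
        case False
        then have "u x a * u z s = 0" using zero[OF V(1) V(4) V(3) sV] exz by simp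
        then show ?thesis by simp
      next
        case True
        then have "\<not> E s b" using sym \<open>\<not> (E a s \<and> E b s)\<close> by blast
        then have "u z s * u y b = 0" using zero[OF V(3) sV V(2) V(5)] sym[OF eyz] by simp
        then show ?thesis by (simp add: mult.assoc)
      qed
    qed
    have "(\<Sum>s\<in>{1..n}. u x a * u z s * u y b) = u x a * u z c * u y b + (\<Sum>s\<in>{1..n} - {c}. u x a * u z s * u y b)"
      using sum.remove[OF _ cV] by simp
    also have "(\<Sum>s\<in>{1..n} - {c}. u x a * u z s * u y b) = 0" using sum.neutral[OF Z] .
    finally show ?thesis by simp
  qed
  finally show ?thesis .
qed

lemma uniq_cn:
  assumes hyp: "\<forall>i k. E i k \<longrightarrow> card {l\<in>{1..n}. E i l \<and> E k l} = 1"
    and "E a b" "E a s" "E b s" "E a t" "E b t" "s \<in> {1..(n::nat)}" "t \<in> {1..n}"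
  shows "s = t"
proof -
  have "card {l\<in>{1..n}. E a l \<and> E b l} = 1" using hyp assms(2) by blast
  then obtain x where x: "{l\<in>{1..n}. E a l \<and> E b l} = {x}"
    by (rule card_1_singletonE)
  have "s \<in> {l\<in>{1..n}. E a l \<and> E b l}" "t \<in> {l\<in>{1..n}. E a l \<and> E b l}"
    using assms by auto
  then show ?thesis unfolding x by simp
qed

lemma part1:
  assumes sg: "simple_graph n E"
    and hyp: "\<forall>i k. E i k \<longrightarrow> card {l\<in>{1..n}. E i l \<and> E k l} = 1"
  shows "qaut_eq_star TYPE('a::{real_normed_algebra_1,banach}) n E"
  unfolding qaut_eq_star_def
proof (intro allI impI ballI)
  fix st sc and u :: "nat \<Rightarrow> nat \<Rightarrow> 'a" and i j k l
  assume cq: "unital_cstar_algebra st sc \<and> qaut_rel n E st u"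
    and V: "i \<in> {1..n}" "j \<in> {1..n}" "k \<in> {1..n}" "l \<in> {1..n}"
    and ee: "E i k \<and> E j l"
  have cs: "unital_cstar_algebra st sc" and qr: "qaut_rel n E st u" using cq by auto
  have sym: "\<And>p q. E p q \<Longrightarrow> E q p" using sg unfolding simple_graph_def by blast
  have "card {x\<in>{1..n}. E i x \<and> E k x} = 1" using hyp ee by blast
  then obtain p where p: "{x\<in>{1..n}. E i x \<and> E k x} = {p}"
    by (rule card_1_singletonE)
  have "card {x\<in>{1..n}. E j x \<and> E l x} = 1" using hyp ee by blast
  then obtain q where q: "{x\<in>{1..n}. E j x \<and> E l x} = {q}"
    by (rule card_1_singletonE)
  have pp: "p \<in> {1..n}" "E i p" "E k p" using p by blast+
  have qq: "q \<in> {1..n}" "E j q" "E l q" using q by blast+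
  have ik: "E i k" and jl: "E j l" using ee by auto
  have st: "\<And>a b. a \<in> {1..n} \<Longrightarrow> b \<in> {1..n} \<Longrightarrow> u a b = st (u a b) \<and> u a b = u a b * u a b"
    using qr unfolding qaut_rel_def by blast
  have h1: "u i j * u k l = u i j * u p q * u k l"
    apply (rule three[OF sg qr ik jl pp(2) pp(3) qq(1)])
    using uniq_cn[OF hyp jl] qq by blast
  have h2: "u p q * u k l = u p q * u i j * u k l"
    apply (rule three[OF sg qr sym[OF pp(3)] sym[OF qq(3)] sym[OF pp(2)] sym[OF ik] V(2)])
    using uniq_cn[OF hyp sym[OF qq(3)], of _ j] qq jl sym V by blast
  have h3: "u p q * u i j = u p q * u k l * u i j"
    apply (rule three[OF sg qr sym[OF pp(2)] sym[OF qq(2)] sym[OF pp(3)] ik V(4)])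
    using uniq_cn[OF hyp sym[OF qq(2)], of _ l] qq jl sym V by blast
  show "u i j * u k l = u k l * u i j"
    using proj_comm[OF cs _ _ _ _ h1 h2 h3] st V by metis
qed

lemma gdist_le: "x \<in> ball_k E m v \<Longrightarrow> gdist E v x \<le> m"
  unfolding gdist_def by (rule Least_le)

lemma gdist_in: "x \<in> ball_k E m v \<Longrightarrow> x \<in> ball_k E (gdist E v x) v"
  unfolding gdist_def by (rule LeastI)

lemma gdist0: "gdist E v v = 0"
  using gdist_le[of v E 0 v] by simp

lemma gdist_0_iff: "x \<in> ball_k E m v \<Longrightarrow> gdist E v x = 0 \<longleftrightarrow> x = v"
  using gdist_in[of x E m v] gdist0 by auto

lemma gdist_1: "E v x \<Longrightarrow> x \<noteq> v \<Longrightarrow> gdist E v x = 1"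
proof -
  assume a: "E v x" "x \<noteq> v"
  have m: "x \<in> ball_k E 1 v" using a by simp
  have "gdist E v x \<le> 1" using gdist_le[OF m] .
  moreover have "gdist E v x \<noteq> 0" using gdist_0_iff[OF m] a by simp
  ultimately show ?thesis by simp
qed

lemma gdist_1D: "x \<in> ball_k E m v \<Longrightarrow> gdist E v x = 1 \<Longrightarrow> E v x"
proof -
  assume m: "x \<in> ball_k E m v" and g: "gdist E v x = 1"
  have "x \<in> ball_k E 1 v" using gdist_in[OF m] g by simp
  moreover have "x \<noteq> v" using g gdist0[of E v] by auto
  ultimately show ?thesis by simp
qed

lemma gdist_2: "E v w \<Longrightarrow> E w x \<Longrightarrow> gdist E v x \<le> 2"
proof -
  assume "E v w" "E w x"
  then have "x \<in> ball_k E 2 v" by (simp add: numeral_2_eq_2) blast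
  then show ?thesis by (rule gdist_le)
qed

lemma part2:
  assumes sg: "simple_graph n E"
    and dr: "distance_regular n E D b c" and bb: "b 0 = b 1 + 2"
  shows "\<forall>i k. E i k \<longrightarrow> card {l\<in>{1..n}. E i l \<and> E k l} = 1"
proof (intro allI impI)
  fix v w assume e: "E v w"
  have V: "v \<in> {1..n}" "w \<in> {1..n}" using sg e unfolding simple_graph_def by blast+
  have sym: "\<And>p q. E p q \<Longrightarrow> E q p" and irr: "\<And>p. \<not> E p p"
    using sg unfolding simple_graph_def by blast+
  have conn: "\<And>x y. x \<in> {1..n} \<Longrightarrow> y \<in> {1..n} \<Longrightarrow> \<exists>m. y \<in> ball_k E m x"
    using dr unfolding distance_regular_def connected_graph_def by blast
  have Dd: "D = diameter n E" using dr unfolding distance_regular_def by blast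
  have fin: "finite {gdist E x y | x y. x \<in> {1..n} \<and> y \<in> {1..n}}"
  proof -
    have "{gdist E x y | x y. x \<in> {1..n} \<and> y \<in> {1..n}} = (\<lambda>(x,y). gdist E x y) ` ({1..n} \<times> {1..n})"
      by (auto simp del: atLeastAtMost_iff)
    then show ?thesis by simp
  qed
  have leD: "\<And>x y. x \<in> {1..n} \<Longrightarrow> y \<in> {1..n} \<Longrightarrow> gdist E x y \<le> D"
    unfolding Dd diameter_def by (rule Max_ge[OF fin]) blast
  have reg: "\<And>x y. x \<in> {1..n} \<Longrightarrow> y \<in> {1..n} \<Longrightarrow>
        card {z\<in>{1..n}. E y z \<and> gdist E x z = gdist E x y + 1} = b (gdist E x y)"
    using dr leD unfolding distance_regular_def by blast
  have gvw: "gdist E v w = 1" using gdist_1[of E v w] irr e by auto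
  define N where "N = {x\<in>{1..n}. E w x}"
  define A where "A = {l\<in>{1..n}. E v l \<and> E w l}"
  define B where "B = {x\<in>{1..n}. E w x \<and> gdist E v x = 2}"
  have "card {z\<in>{1..n}. E w z \<and> gdist E w z = gdist E w w + 1} = b 0"
    using reg[OF V(2) V(2)] gdist0[of E w] by simp
  moreover have "{z\<in>{1..n}. E w z \<and> gdist E w z = gdist E w w + 1} = N"
    unfolding N_def gdist0 using gdist_1 irr by fastforce
  ultimately have cN: "card N = b 0" by simp
  have "card {z\<in>{1..n}. E w z \<and> gdist E v z = gdist E v w + 1} = b 1"
    using reg[OF V(1) V(2)] gvw by simp
  then have cB: "card B = b 1" unfolding B_def gvw by (simp add: numeral_2_eq_2)
  have NU: "N = insert v (A \<union> B)"
  proof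
    show "insert v (A \<union> B) \<subseteq> N" unfolding N_def A_def B_def using V sym e by auto
  next
    show "N \<subseteq> insert v (A \<union> B)"
    proof
      fix x assume x: "x \<in> N"
      then have xV: "x \<in> {1..n}" and ewx: "E w x" unfolding N_def by auto
      obtain m where m: "x \<in> ball_k E m v" using conn[OF V(1) xV] by blast
      have "gdist E v x \<le> 2" using gdist_2[OF e ewx] .
      then have "gdist E v x = 0 \<or> gdist E v x = 1 \<or> gdist E v x = 2" by auto
      then show "x \<in> insert v (A \<union> B)"
        using gdist_0_iff[OF m] gdist_1D[OF m] xV ewx unfolding A_def B_def by auto
    qed
  qed
  have fA: "finite A" "finite B" unfolding A_def B_def by auto
  have "v \<notin> A \<union> B" unfolding A_def B_def using irr gdist0[of E v] by auto
  moreover have "A \<inter> B = {}" unfolding A_def B_def using gdist_1 irr by fastforce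
  ultimately have "card N = 1 + card A + card B"
    unfolding NU using fA by (simp add: card_Un_disjoint)
  then show "card {l\<in>{1..n}. E v l \<and> E w l} = 1"
    using cN cB bb unfolding A_def by simp
qed

theorem lemma3p5:
  fixes n :: nat and E :: "nat \<Rightarrow> nat \<Rightarrow> bool"
  assumes "simple_graph n E"
  shows "((\<forall>i k. E i k \<longrightarrow> card {l\<in>{1..n}. E i l \<and> E k l} = 1)
            \<longrightarrow> qaut_eq_star TYPE('a::{real_normed_algebra_1,banach}) n E)
       \<and> ((\<exists>D b c. distance_regular n E D b c \<and> b 0 = b 1 + 2)
            \<longrightarrow> qaut_eq_star TYPE('a::{real_normed_algebra_1,banach}) n E)"
  using part1[OF assms] part2[OF assms] by blast

end
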